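(* Let $G$ be a connected (finite, simple) graph. Then $G$ is (claw, bull)-free if and only if it belongs to one of the following (disjoint) classes of graphs: (i) the class of graphs which are expansions of paths of length at least four; (ii) the class of graphs which are expansions of cycles of length at least six; (iii) the class of connected graphs which are complements of triangle-free graphs.
   Context: A claw is a graph isomorphic to $K_{1,3}$. A bull is the graph obtained from a triangle by adding two pendant edges at two different vertices (so it has 5 vertices and 5 edges). A graph is (claw, bull)-free if it has no induced subgraph isomorphic to a claw or to a bull. An expansion of a graph $F$ with vertex set $\{v_1,\dots,v_n\}$ is any graph $H$ obtained from $F$ by replacing each vertex $v_i$ by a nonempty clique $K^{[i]}$, the cliques being pairwise vertex-disjoint, and adding all edges between $V(K^{[i]})$ and $V(K^{[j]})$ whenever $v_iv_j\in E(F)$ (and no other edges between different cliques). The length of a path is its number of edges. *)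

theory Defs
  imports Main
begin

definition graph :: "'a set \<Rightarrow> ('a \<Rightarrow> 'a \<Rightarrow> bool) \<Rightarrow> bool" where
  "graph V E \<longleftrightarrow> finite V \<and> (\<forall>x y. E x y \<longrightarrow> x \<in> V \<and> y \<in> V)
     \<and> (\<forall>x y. E x y \<longrightarrow> E y x) \<and> (\<forall>x. \<not> E x x)"

definition connected_graph :: "'a set \<Rightarrow> ('a \<Rightarrow> 'a \<Rightarrow> bool) \<Rightarrow> bool" where
  "connected_graph V E \<longleftrightarrow> V \<noteq> {} \<and> (\<forall>x\<in>V. \<forall>y\<in>V. E\<^sup>*\<^sup>* x y)"

definition has_induced :: "'a set \<Rightarrow> ('a \<Rightarrow> 'a \<Rightarrow> bool) \<Rightarrow> 'b set \<Rightarrow> ('b \<Rightarrow> 'b \<Rightarrow> bool) \<Rightarrow> bool" where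
  "has_induced V E W F \<longleftrightarrow> (\<exists>f. inj_on f W \<and> f ` W \<subseteq> V \<and>
      (\<forall>x\<in>W. \<forall>y\<in>W. E (f x) (f y) \<longleftrightarrow> F x y))"

definition claw_V :: "nat set" where "claw_V = {0,1,2,3}"
definition claw_E :: "nat \<Rightarrow> nat \<Rightarrow> bool" where
  "claw_E x y \<longleftrightarrow> (x = 0 \<and> y \<in> {1,2,3}) \<or> (y = 0 \<and> x \<in> {1,2,3})"

definition bull_V :: "nat set" where "bull_V = {0,1,2,3,4}"
definition bull_E :: "nat \<Rightarrow> nat \<Rightarrow> bool" where
  "bull_E x y \<longleftrightarrow> {x,y} \<in> {{0,1},{1,2},{0,2},{0,3},{1,4}}"

definition claw_bull_free :: "'a set \<Rightarrow> ('a \<Rightarrow> 'a \<Rightarrow> bool) \<Rightarrow> bool" where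
  "claw_bull_free V E \<longleftrightarrow> \<not> has_induced V E claw_V claw_E \<and> \<not> has_induced V E bull_V bull_E"

text \<open>Path of length k (k edges): vertices 0..k, i adjacent to i+1.\<close>
definition path_V :: "nat \<Rightarrow> nat set" where "path_V k = {0..k}"
definition path_E :: "nat \<Rightarrow> nat \<Rightarrow> nat \<Rightarrow> bool" where
  "path_E k i j \<longleftrightarrow> i \<le> k \<and> j \<le> k \<and> (j = i + 1 \<or> i = j + 1)"

definition cycle_V :: "nat \<Rightarrow> nat set" where "cycle_V k = {0..<k}"
definition cycle_E :: "nat \<Rightarrow> nat \<Rightarrow> nat \<Rightarrow> bool" where
  "cycle_E k i j \<longleftrightarrow> i < k \<and> j < k \<and> (j = (i + 1) mod k \<or> i = (j + 1) mod k)"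

text \<open>(V,E) is an expansion of (W,F): each vertex w of W is replaced by the
  nonempty clique phi^-1(w); distinct cliques are completely joined iff
  the corresponding vertices are adjacent in F, otherwise anticomplete.\<close>
definition expansion_of :: "'a set \<Rightarrow> ('a \<Rightarrow> 'a \<Rightarrow> bool) \<Rightarrow> 'b set \<Rightarrow> ('b \<Rightarrow> 'b \<Rightarrow> bool) \<Rightarrow> bool" where
  "expansion_of V E W F \<longleftrightarrow> (\<exists>\<phi>. \<phi> ` V = W \<and>
      (\<forall>x\<in>V. \<forall>y\<in>V. x \<noteq> y \<longrightarrow> (E x y \<longleftrightarrow> \<phi> x = \<phi> y \<or> F (\<phi> x) (\<phi> y))))"

definition complement :: "'a set \<Rightarrow> ('a \<Rightarrow> 'a \<Rightarrow> bool) \<Rightarrow> 'a \<Rightarrow> 'a \<Rightarrow> bool" where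
  "complement V E x y \<longleftrightarrow> x \<in> V \<and> y \<in> V \<and> x \<noteq> y \<and> \<not> E x y"

definition triangle_free :: "'a set \<Rightarrow> ('a \<Rightarrow> 'a \<Rightarrow> bool) \<Rightarrow> bool" where
  "triangle_free V E \<longleftrightarrow> \<not> (\<exists>x\<in>V. \<exists>y\<in>V. \<exists>z\<in>V. E x y \<and> E y z \<and> E x z)"

end

theory Submission
  imports Defs
begin


lemma bull_E_iff: "bull_E x y \<longleftrightarrow> (x=0\<and>y=1) \<or> (x=1\<and>y=0) \<or> (x=1\<and>y=2) \<or> (x=2\<and>y=1)
  \<or> (x=0\<and>y=2) \<or> (x=2\<and>y=0) \<or> (x=0\<and>y=3) \<or> (x=3\<and>y=0) \<or> (x=1\<and>y=4) \<or> (x=4\<and>y=1)"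
  unfolding bull_E_def by (auto simp: doubleton_eq_iff)

lemma cycle_E_iff: "cycle_E k i j \<longleftrightarrow> i < k \<and> j < k \<and>
   (j = i + 1 \<or> i = j + 1 \<or> (i + 1 = k \<and> j = 0) \<or> (j + 1 = k \<and> i = 0))"
proof (cases "i<k \<and> j<k")
  case True
  have "(i+1) mod k = (if i+1 = k then 0 else i+1)" "(j+1) mod k = (if j+1 = k then 0 else j+1)"
    using True by auto
  then show ?thesis unfolding cycle_E_def using True by auto
next
  case False then show ?thesis unfolding cycle_E_def by auto
qed

locale cbg =
  fixes V :: "'a set" and E :: "'a \<Rightarrow> 'a \<Rightarrow> bool"
  assumes gr: "graph V E" and cbf: "claw_bull_free V E"
begin

lemma sym: "E x y \<Longrightarrow> E y x" using gr by (auto simp: graph_def)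
lemma irr: "\<not> E x x" using gr by (auto simp: graph_def)
lemma inV: "E x y \<Longrightarrow> x \<in> V" "E x y \<Longrightarrow> y \<in> V" using gr by (auto simp: graph_def)

lemma no_claw:
  assumes "E c a" "E c b" "E c d" "\<not>E a b" "\<not>E a d" "\<not>E b d" "a\<noteq>b" "a\<noteq>d" "b\<noteq>d"
  shows False
proof -
  have ne: "c\<noteq>a" "c\<noteq>b" "c\<noteq>d" using assms irr by metis+
  have s: "E a c" "E b c" "E d c" "\<not>E b a" "\<not>E d a" "\<not>E d b" using assms sym by metis+
  let ?f = "\<lambda>n::nat. if n=0 then c else if n=1 then a else if n=2 then b else d"
  have i: "inj_on ?f claw_V" using ne assms unfolding claw_V_def inj_on_def by auto
  have im: "?f ` claw_V \<subseteq> V" using assms inV unfolding claw_V_def by auto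
  have e: "\<forall>x\<in>claw_V. \<forall>y\<in>claw_V. E (?f x) (?f y) \<longleftrightarrow> claw_E x y"
    unfolding claw_V_def claw_E_def using assms s irr by simp
  have "has_induced V E claw_V claw_E"
    unfolding has_induced_def using i im e by blast
  thus False using cbf by (simp add: claw_bull_free_def)
qed

lemma no_bull:
  assumes "E a b" "E b c" "E a c" "E a d" "\<not>E b d" "\<not>E c d" "E b e" "\<not>E a e" "\<not>E c e" "\<not>E d e"
  shows False
proof -
  have ne: "a\<noteq>b" "a\<noteq>c" "a\<noteq>d" "a\<noteq>e" "b\<noteq>c" "b\<noteq>d" "b\<noteq>e" "c\<noteq>d" "c\<noteq>e" "d\<noteq>e"
    using assms irr sym by metis+
  have s: "E b a" "E c b" "E c a" "E d a" "\<not>E d b" "\<not>E d c" "E e b" "\<not>E e a" "\<not>E e c" "\<not>E e d"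
    using assms sym by metis+
  let ?f = "\<lambda>n::nat. if n=0 then a else if n=1 then b else if n=2 then c else if n=3 then d else e"
  have i: "inj_on ?f bull_V" using ne unfolding bull_V_def inj_on_def by auto
  have im: "?f ` bull_V \<subseteq> V" using assms inV unfolding bull_V_def by auto
  have e: "\<forall>x\<in>bull_V. \<forall>y\<in>bull_V. E (?f x) (?f y) \<longleftrightarrow> bull_E x y"
    unfolding bull_V_def bull_E_iff using assms s irr by simp
  have "has_induced V E bull_V bull_E"
    unfolding has_induced_def using i im e by blast
  thus False using cbf by (simp add: claw_bull_free_def)
qed

end


lemma exp_no_claw:
  assumes gr: "graph V E" and ex: "expansion_of V E W F"
    and Fc: "\<And>i j1 j2 j3. F i j1 \<Longrightarrow> F i j2 \<Longrightarrow> F i j3 \<Longrightarrow> j1=j2 \<or> j1=j3 \<or> j2=j3"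
  shows "\<not> has_induced V E claw_V claw_E"
proof
  assume "has_induced V E claw_V claw_E"
  then obtain f where inj: "inj_on f claw_V" and sub: "f ` claw_V \<subseteq> V"
    and e: "\<forall>x\<in>claw_V. \<forall>y\<in>claw_V. E (f x) (f y) \<longleftrightarrow> claw_E x y"
    unfolding has_induced_def by blast
  obtain \<phi> where ph: "\<forall>x\<in>V. \<forall>y\<in>V. x \<noteq> y \<longrightarrow> (E x y \<longleftrightarrow> \<phi> x = \<phi> y \<or> F (\<phi> x) (\<phi> y))"
    using ex unfolding expansion_of_def by blast
  have P: "\<And>x y. x \<in> V \<Longrightarrow> y \<in> V \<Longrightarrow> x \<noteq> y \<Longrightarrow> E x y \<longleftrightarrow> \<phi> x = \<phi> y \<or> F (\<phi> x) (\<phi> y)"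
    using ph by blast
  have sy: "\<And>x y. E x y \<Longrightarrow> E y x" using gr by (auto simp: graph_def)
  define c a b d where "c = f 0" and "a = f 1" and "b = f 2" and "d = f 3"
  have V: "c\<in>V" "a\<in>V" "b\<in>V" "d\<in>V" using sub by (auto simp: claw_V_def c_def a_def b_def d_def)
  have ne: "c\<noteq>a" "c\<noteq>b" "c\<noteq>d" "a\<noteq>b" "a\<noteq>d" "b\<noteq>d"
    using inj by (auto simp: claw_V_def c_def a_def b_def d_def inj_on_def)
  have Ee: "E c a" "E c b" "E c d" "\<not>E a b" "\<not>E a d" "\<not>E b d"
    using e by (auto simp: claw_V_def claw_E_def c_def a_def b_def d_def)
  have Ee2: "\<not>E b a" "\<not>E d a" using Ee sy by blast+
  have ca: "E c a \<longleftrightarrow> \<phi> c = \<phi> a \<or> F (\<phi> c) (\<phi> a)" by (rule P) (use V ne in auto)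
  have cb: "E c b \<longleftrightarrow> \<phi> c = \<phi> b \<or> F (\<phi> c) (\<phi> b)" by (rule P) (use V ne in auto)
  have cd: "E c d \<longleftrightarrow> \<phi> c = \<phi> d \<or> F (\<phi> c) (\<phi> d)" by (rule P) (use V ne in auto)
  have ab: "E a b \<longleftrightarrow> \<phi> a = \<phi> b \<or> F (\<phi> a) (\<phi> b)" by (rule P) (use V ne in auto)
  have ad: "E a d \<longleftrightarrow> \<phi> a = \<phi> d \<or> F (\<phi> a) (\<phi> d)" by (rule P) (use V ne in auto)
  have bd: "E b d \<longleftrightarrow> \<phi> b = \<phi> d \<or> F (\<phi> b) (\<phi> d)" by (rule P) (use V ne in auto)
  have ba: "E b a \<longleftrightarrow> \<phi> b = \<phi> a \<or> F (\<phi> b) (\<phi> a)" by (rule P) (use V ne in auto)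
  have da: "E d a \<longleftrightarrow> \<phi> d = \<phi> a \<or> F (\<phi> d) (\<phi> a)" by (rule P) (use V ne in auto)
  have 1: "\<phi> c \<noteq> \<phi> a" using ab cb Ee by auto
  have 2: "\<phi> c \<noteq> \<phi> b" using ba ca Ee Ee2 by auto
  have 3: "\<phi> c \<noteq> \<phi> d" using da ca Ee Ee2 by auto
  have "F (\<phi> c) (\<phi> a)" "F (\<phi> c) (\<phi> b)" "F (\<phi> c) (\<phi> d)" using 1 2 3 ca cb cd Ee by auto
  moreover have "\<phi> a \<noteq> \<phi> b" "\<phi> a \<noteq> \<phi> d" "\<phi> b \<noteq> \<phi> d" using ab ad bd Ee by auto
  ultimately show False using Fc by blast
qed

lemma exp_no_bull:
  assumes gr: "graph V E" and ex: "expansion_of V E W F"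
    and Ft: "\<And>i j l. F i j \<Longrightarrow> F j l \<Longrightarrow> F i l \<Longrightarrow> False"
  shows "\<not> has_induced V E bull_V bull_E"
proof
  assume "has_induced V E bull_V bull_E"
  then obtain f where inj: "inj_on f bull_V" and sub: "f ` bull_V \<subseteq> V"
    and e: "\<forall>x\<in>bull_V. \<forall>y\<in>bull_V. E (f x) (f y) \<longleftrightarrow> bull_E x y"
    unfolding has_induced_def by blast
  obtain \<phi> where ph: "\<forall>x\<in>V. \<forall>y\<in>V. x \<noteq> y \<longrightarrow> (E x y \<longleftrightarrow> \<phi> x = \<phi> y \<or> F (\<phi> x) (\<phi> y))"
    using ex unfolding expansion_of_def by blast
  have P: "\<And>x y. x \<in> V \<Longrightarrow> y \<in> V \<Longrightarrow> x \<noteq> y \<Longrightarrow> E x y \<longleftrightarrow> \<phi> x = \<phi> y \<or> F (\<phi> x) (\<phi> y)"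
    using ph by blast
  define a b c d e' where "a = f 0" and "b = f 1" and "c = f 2" and "d = f 3" and "e' = f 4"
  have V: "a\<in>V" "b\<in>V" "c\<in>V" "d\<in>V" "e'\<in>V"
    using sub by (auto simp: bull_V_def a_def b_def c_def d_def e'_def)
  have ne: "a\<noteq>b" "a\<noteq>c" "a\<noteq>d" "a\<noteq>e'" "b\<noteq>c" "b\<noteq>d" "b\<noteq>e'" "c\<noteq>d" "c\<noteq>e'" "d\<noteq>e'"
    using inj by (auto simp: bull_V_def a_def b_def c_def d_def e'_def inj_on_def)
  have Ee: "E a b" "E b c" "E a c" "E a d" "\<not>E b d" "\<not>E c d" "E b e'" "\<not>E a e'" "\<not>E c e'"
    using e by (auto simp: bull_V_def bull_E_iff a_def b_def c_def d_def e'_def)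
  have ab: "E a b \<longleftrightarrow> \<phi> a = \<phi> b \<or> F (\<phi> a) (\<phi> b)" by (rule P) (use V ne in auto)
  have bc: "E b c \<longleftrightarrow> \<phi> b = \<phi> c \<or> F (\<phi> b) (\<phi> c)" by (rule P) (use V ne in auto)
  have ac: "E a c \<longleftrightarrow> \<phi> a = \<phi> c \<or> F (\<phi> a) (\<phi> c)" by (rule P) (use V ne in auto)
  have ad: "E a d \<longleftrightarrow> \<phi> a = \<phi> d \<or> F (\<phi> a) (\<phi> d)" by (rule P) (use V ne in auto)
  have bd: "E b d \<longleftrightarrow> \<phi> b = \<phi> d \<or> F (\<phi> b) (\<phi> d)" by (rule P) (use V ne in auto)
  have cd: "E c d \<longleftrightarrow> \<phi> c = \<phi> d \<or> F (\<phi> c) (\<phi> d)" by (rule P) (use V ne in auto)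
  have be: "E b e' \<longleftrightarrow> \<phi> b = \<phi> e' \<or> F (\<phi> b) (\<phi> e')" by (rule P) (use V ne in auto)
  have ce: "E c e' \<longleftrightarrow> \<phi> c = \<phi> e' \<or> F (\<phi> c) (\<phi> e')" by (rule P) (use V ne in auto)
  have 1: "\<phi> a \<noteq> \<phi> b" using ad bd Ee by auto
  have 2: "\<phi> a \<noteq> \<phi> c" using ad cd Ee by auto
  have 3: "\<phi> b \<noteq> \<phi> c" using be ce Ee by auto
  have "F (\<phi> a) (\<phi> b)" "F (\<phi> b) (\<phi> c)" "F (\<phi> a) (\<phi> c)" using 1 2 3 ab bc ac Ee by auto
  thus False using Ft by blast
qed

lemma path_cbf:
  assumes gr: "graph V E" and ex: "expansion_of V E (path_V k) (path_E k)"
  shows "claw_bull_free V E"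
proof -
  have "\<not> has_induced V E claw_V claw_E"
    by (rule exp_no_claw[OF gr ex]) (unfold path_E_def, arith)
  moreover have "\<not> has_induced V E bull_V bull_E"
    by (rule exp_no_bull[OF gr ex]) (unfold path_E_def, arith)
  ultimately show ?thesis unfolding claw_bull_free_def by blast
qed

lemma cyc_nb: "cycle_E k i j \<Longrightarrow> j = (if i+1=k then 0 else i+1) \<or> j = (if i=0 then k-1 else i-1)"
  unfolding cycle_E_iff by auto
lemma cyc_claw: "cycle_E k i j1 \<Longrightarrow> cycle_E k i j2 \<Longrightarrow> cycle_E k i j3 \<Longrightarrow> j1=j2 \<or> j1=j3 \<or> j2=j3"
  using cyc_nb[of k i j1] cyc_nb[of k i j2] cyc_nb[of k i j3] by metis
lemma cyc_tri: "4 \<le> k \<Longrightarrow> cycle_E k i j \<Longrightarrow> cycle_E k j l \<Longrightarrow> cycle_E k i l \<Longrightarrow> False"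
  unfolding cycle_E_iff by (elim conjE disjE) linarith+

lemma cycle_cbf:
  assumes gr: "graph V E" and k: "4 \<le> k" and ex: "expansion_of V E (cycle_V k) (cycle_E k)"
  shows "claw_bull_free V E"
proof -
  have "\<not> has_induced V E claw_V claw_E"
    by (rule exp_no_claw[OF gr ex]) (rule cyc_claw)
  moreover have "\<not> has_induced V E bull_V bull_E"
    by (rule exp_no_bull[OF gr ex]) (rule cyc_tri[OF k])
  ultimately show ?thesis unfolding claw_bull_free_def by blast
qed

lemma cotf_cbf:
  assumes gr: "graph V E" and tf: "triangle_free V (complement V E)"
  shows "claw_bull_free V E"
  unfolding claw_bull_free_def
proof
  show "\<not> has_induced V E claw_V claw_E"
  proof
    assume "has_induced V E claw_V claw_E"
    then obtain f where inj: "inj_on f claw_V" and sub: "f ` claw_V \<subseteq> V"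
      and e: "\<forall>x\<in>claw_V. \<forall>y\<in>claw_V. E (f x) (f y) \<longleftrightarrow> claw_E x y"
      unfolding has_induced_def by blast
    have "f 1 \<noteq> f 2" "f 1 \<noteq> f 3" "f 2 \<noteq> f 3" using inj by (auto simp: claw_V_def inj_on_def)
    moreover have "f 1 \<in> V" "f 2 \<in> V" "f 3 \<in> V" using sub by (auto simp: claw_V_def)
    moreover have "\<not>E (f 1) (f 2)" "\<not>E (f 2) (f 3)" "\<not>E (f 1) (f 3)" using e by (auto simp: claw_V_def claw_E_def)
    ultimately show False using tf unfolding triangle_free_def complement_def by blast
  qed
  show "\<not> has_induced V E bull_V bull_E"
  proof
    assume "has_induced V E bull_V bull_E"
    then obtain f where inj: "inj_on f bull_V" and sub: "f ` bull_V \<subseteq> V"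
      and e: "\<forall>x\<in>bull_V. \<forall>y\<in>bull_V. E (f x) (f y) \<longleftrightarrow> bull_E x y"
      unfolding has_induced_def by blast
    have "f 2 \<noteq> f 3" "f 2 \<noteq> f 4" "f 3 \<noteq> f 4" using inj by (auto simp: bull_V_def inj_on_def)
    moreover have "f 2 \<in> V" "f 3 \<in> V" "f 4 \<in> V" using sub by (auto simp: bull_V_def)
    moreover have "\<not>E (f 2) (f 3)" "\<not>E (f 3) (f 4)" "\<not>E (f 2) (f 4)" using e by (auto simp: bull_V_def bull_E_iff)
    ultimately show False using tf unfolding triangle_free_def complement_def by blast
  qed
qed


definition touch :: "('a \<Rightarrow> 'a \<Rightarrow> bool) \<Rightarrow> 'a set \<Rightarrow> 'a \<Rightarrow> ('a \<Rightarrow> nat) \<Rightarrow> nat \<Rightarrow> bool" where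
  "touch E S v \<phi> i \<longleftrightarrow> (\<exists>x\<in>S. \<phi> x = i \<and> E v x)"
definition full :: "('a \<Rightarrow> 'a \<Rightarrow> bool) \<Rightarrow> 'a set \<Rightarrow> 'a \<Rightarrow> ('a \<Rightarrow> nat) \<Rightarrow> nat \<Rightarrow> bool" where
  "full E S v \<phi> i \<longleftrightarrow> (\<forall>x\<in>S. \<phi> x = i \<longrightarrow> E v x)"

locale pexp = cbg V E for V and E :: "'a \<Rightarrow> 'a \<Rightarrow> bool" +
  fixes S :: "'a set" and k :: nat and \<phi> :: "'a \<Rightarrow> nat" and v :: 'a
  assumes SV: "S \<subseteq> V" and k4: "4 \<le> k" and onto: "\<phi> ` S = {0..k}"
    and adj: "\<And>x y. x \<in> S \<Longrightarrow> y \<in> S \<Longrightarrow> E x y \<longleftrightarrow> (x \<noteq> y \<and> \<phi> x \<le> \<phi> y + 1 \<and> \<phi> y \<le> \<phi> x + 1)"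
    and vS: "v \<notin> S"
begin

abbreviation "A \<equiv> touch E S v \<phi>"
abbreviation "N \<equiv> full E S v \<phi>"

lemma Ev[simp]: "E x v \<longleftrightarrow> E v x" using sym by blast

lemma rep: "i \<le> k \<Longrightarrow> \<exists>x\<in>S. \<phi> x = i"
  using onto by (metis atLeastAtMost_iff imageE zero_le)

lemma bnd: "x \<in> S \<Longrightarrow> \<phi> x \<le> k"
  using onto by auto

lemma A_bnd: "A i \<Longrightarrow> i \<le> k"
  using bnd unfolding touch_def by auto

lemma notA: "\<not> A i \<Longrightarrow> x \<in> S \<Longrightarrow> \<phi> x = i \<Longrightarrow> \<not> E v x"
  unfolding touch_def by auto

lemma F9b: assumes "2 \<le> i" "A i" "\<not> A (i-1)" "\<not> A (i-2)" shows "N i"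
  unfolding full_def
proof (intro ballI impI)
  fix x' assume x': "x' \<in> S" "\<phi> x' = i"
  show "E v x'"
  proof (rule ccontr)
    assume nx: "\<not> E v x'"
    obtain x where x: "x \<in> S" "\<phi> x = i" "E v x" using assms(2) unfolding touch_def by auto
    have "i - 1 \<le> k" using bnd[OF x(1)] x(2) by linarith
    then obtain w where w: "w \<in> S" "\<phi> w = i - 1" using rep by blast
    have "i - 2 \<le> k" using bnd[OF x(1)] x(2) by linarith
    then obtain t where t: "t \<in> S" "\<phi> t = i - 2" using rep by blast
    have vw: "\<not> E v w" using notA[OF assms(3) w] .
    have vt: "\<not> E v t" using notA[OF assms(4) t] .
    have "x \<noteq> x'" using x nx by auto
    show False
      by (rule no_bull[of x w x' v t]) (use x x' w t vw vt nx \<open>x\<noteq>x'\<close> assms(1) in \<open>auto simp: adj\<close>)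
  qed
qed


lemma getA: "A i \<Longrightarrow> \<exists>x\<in>S. \<phi> x = i \<and> E v x" unfolding touch_def by auto
lemma getN: "\<not> N i \<Longrightarrow> \<exists>x\<in>S. \<phi> x = i \<and> \<not> E v x" unfolding full_def by auto
lemma useN: "N i \<Longrightarrow> x \<in> S \<Longrightarrow> \<phi> x = i \<Longrightarrow> E v x" unfolding full_def by auto

lemma F9a: assumes "i+3 \<le> k" "N (i+1)" "A (i+2)" "\<not> A (i+3)" shows "N i"
proof (rule ccontr)
  assume "\<not> N i"
  then obtain x' where x': "x' \<in> S" "\<phi> x' = i" "\<not> E v x'" using getN by blast
  have "i+1 \<le> k" using assms(1) k4 by linarith
  then obtain u where u: "u \<in> S" "\<phi> u = i+1" using rep by blast
  obtain y where y: "y \<in> S" "\<phi> y = i+2" "E v y" using getA assms(3) by blast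
  obtain z where z: "z \<in> S" "\<phi> z = i+3" using rep assms(1) by blast
  have vu: "E v u" using useN[OF assms(2) u] .
  have vz: "\<not> E v z" using notA[OF assms(4) z] .
  show False
    by (rule no_bull[of u y v x' z]) (use x' u y z vu vz in \<open>auto simp: adj\<close>)
qed

lemma F9a': assumes "3 \<le> m" "m \<le> k" "N (m-1)" "A (m-2)" "\<not> A (m-3)" shows "N m"
proof (rule ccontr)
  assume "\<not> N m"
  then obtain x' where x': "x' \<in> S" "\<phi> x' = m" "\<not> E v x'" using getN by blast
  have "m-1 \<le> k" using assms(2) k4 by linarith
  then obtain u where u: "u \<in> S" "\<phi> u = m-1" using rep by blast
  obtain y where y: "y \<in> S" "\<phi> y = m-2" "E v y" using getA assms(4) by blast
  have "m-3 \<le> k" using assms(2) k4 by linarith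
  then obtain z where z: "z \<in> S" "\<phi> z = m-3" using rep by blast
  have vu: "E v u" using useN[OF assms(3) u] .
  have vz: "\<not> E v z" using notA[OF assms(5) z] .
  show False
    by (rule no_bull[of u y v x' z]) (use x' u y z vu vz assms(1) in \<open>auto simp: adj\<close>)
qed

lemma F3: assumes "i+2 \<le> k" "A i" "\<not> A (i+1)" "\<not> A (i+2)" shows "N i"
proof (rule ccontr)
  assume "\<not> N i"
  then obtain x' where x': "x' \<in> S" "\<phi> x' = i" "\<not> E v x'" using getN by blast
  obtain x where x: "x \<in> S" "\<phi> x = i" "E v x" using getA assms(2) by blast
  have "i+1 \<le> k" using assms(1) k4 by linarith
  then obtain w where w: "w \<in> S" "\<phi> w = i+1" using rep by blast
  obtain t where t: "t \<in> S" "\<phi> t = i+2" using rep assms(1) by blast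
  have vw: "\<not> E v w" using notA[OF assms(3) w] .
  have vt: "\<not> E v t" using notA[OF assms(4) t] .
  have "x \<noteq> x'" using x x' by auto
  show False
    by (rule no_bull[of x w x' v t]) (use x x' w t vw vt \<open>x\<noteq>x'\<close> in \<open>auto simp: adj\<close>)
qed

lemma F8a: assumes "1 \<le> i" "i+1 \<le> k" "A i" "\<not> A (i-1)" "\<not> N (i+1)" shows False
proof -
  obtain x where x: "x \<in> S" "\<phi> x = i" "E v x" using getA assms(3) by blast
  have "i-1 \<le> k" using assms(2) k4 by linarith
  then obtain w where w: "w \<in> S" "\<phi> w = i-1" using rep by blast
  obtain u where u: "u \<in> S" "\<phi> u = i+1" "\<not> E v u" using getN assms(5) by blast
  have vw: "\<not> E v w" using notA[OF assms(4) w] .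
  show False
    by (rule no_claw[of x w v u]) (use x w u vw vS assms(1) in \<open>auto simp: adj\<close>)
qed

lemma F8a': assumes "1 \<le> m" "m+1 \<le> k" "A m" "\<not> A (m+1)" "\<not> N (m-1)" shows False
proof -
  obtain x where x: "x \<in> S" "\<phi> x = m" "E v x" using getA assms(3) by blast
  obtain w where w: "w \<in> S" "\<phi> w = m+1" using rep assms(2) by blast
  obtain u where u: "u \<in> S" "\<phi> u = m-1" "\<not> E v u" using getN assms(5) by blast
  have vw: "\<not> E v w" using notA[OF assms(4) w] .
  show False
    by (rule no_claw[of x w v u]) (use x w u vw vS assms(1) in \<open>auto simp: adj\<close>)
qed

lemma F7: assumes "A 1" "\<not> A 2" "\<not> A 3" shows "N 1"
proof (rule ccontr)
  assume "\<not> N 1"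
  then obtain y' where y': "y' \<in> S" "\<phi> y' = 1" "\<not> E v y'" using getN by blast
  obtain y where y: "y \<in> S" "\<phi> y = 1" "E v y" using getA assms(1) by blast
  have "2 \<le> k" using k4 k4 by linarith
  then obtain r2 where r2: "r2 \<in> S" "\<phi> r2 = 2" using rep by blast
  have "3 \<le> k" using k4 k4 by linarith
  then obtain r3 where r3: "r3 \<in> S" "\<phi> r3 = 3" using rep by blast
  have v2: "\<not> E v r2" using notA[OF assms(2) r2] .
  have v3: "\<not> E v r3" using notA[OF assms(3) r3] .
  have "y \<noteq> y'" using y y' by auto
  show False
    by (rule no_bull[of y r2 y' v r3]) (use y y' r2 r3 v2 v3 \<open>y\<noteq>y'\<close> in \<open>auto simp: adj\<close>)
qed

lemma F7': assumes "A (k-1)" "\<not> A (k-2)" "\<not> A (k-3)" shows "N (k-1)"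
proof (rule ccontr)
  assume "\<not> N (k-1)"
  then obtain y' where y': "y' \<in> S" "\<phi> y' = k-1" "\<not> E v y'" using getN by blast
  obtain y where y: "y \<in> S" "\<phi> y = k-1" "E v y" using getA assms(1) by blast
  have "k-2 \<le> k" using k4 by linarith
  then obtain r2 where r2: "r2 \<in> S" "\<phi> r2 = k-2" using rep by blast
  have "k-3 \<le> k" using k4 by linarith
  then obtain r3 where r3: "r3 \<in> S" "\<phi> r3 = k-3" using rep by blast
  have v2: "\<not> E v r2" using notA[OF assms(2) r2] .
  have v3: "\<not> E v r3" using notA[OF assms(3) r3] .
  have "y \<noteq> y'" using y y' by auto
  show False
    by (rule no_bull[of y r2 y' v r3]) (use y y' r2 r3 v2 v3 \<open>y\<noteq>y'\<close> k4 in \<open>auto simp: adj\<close>)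
qed

lemma F6: assumes "A 1" "\<not> A 2" shows "N 0"
proof (rule ccontr)
  assume "\<not> N 0"
  then obtain x' where x': "x' \<in> S" "\<phi> x' = 0" "\<not> E v x'" using getN by blast
  obtain y where y: "y \<in> S" "\<phi> y = 1" "E v y" using getA assms(1) by blast
  have "2 \<le> k" using k4 k4 by linarith
  then obtain r2 where r2: "r2 \<in> S" "\<phi> r2 = 2" using rep by blast
  have v2: "\<not> E v r2" using notA[OF assms(2) r2] .
  show False
    by (rule no_claw[of y x' v r2]) (use y x' r2 v2 vS in \<open>auto simp: adj\<close>)
qed

lemma F6': assumes "A (k-1)" "\<not> A (k-2)" shows "N k"
proof (rule ccontr)
  assume "\<not> N k"
  then obtain x' where x': "x' \<in> S" "\<phi> x' = k" "\<not> E v x'" using getN by blast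
  obtain y where y: "y \<in> S" "\<phi> y = k-1" "E v y" using getA assms(1) by blast
  have "k-2 \<le> k" using k4 by linarith
  then obtain r2 where r2: "r2 \<in> S" "\<phi> r2 = k-2" using rep by blast
  have v2: "\<not> E v r2" using notA[OF assms(2) r2] .
  show False
    by (rule no_claw[of y x' v r2]) (use y x' r2 v2 vS k4 in \<open>auto simp: adj\<close>)
qed

lemma F5: assumes "1 \<le> i" "i+2 \<le> k" "A i" "A (i+1)" "\<not> A (i-1)" "\<not> A (i+2)" shows False
proof -
  obtain x where x: "x \<in> S" "\<phi> x = i" "E v x" using getA assms(3) by blast
  obtain y where y: "y \<in> S" "\<phi> y = i+1" "E v y" using getA assms(4) by blast
  have "i-1 \<le> k" using assms(2) k4 by linarith
  then obtain w where w: "w \<in> S" "\<phi> w = i-1" using rep by blast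
  obtain z where z: "z \<in> S" "\<phi> z = i+2" using rep assms(2) by blast
  have vw: "\<not> E v w" using notA[OF assms(5) w] .
  have vz: "\<not> E v z" using notA[OF assms(6) z] .
  show False
    by (rule no_bull[of x y v w z]) (use x y w z vw vz assms(1) in \<open>auto simp: adj\<close>)
qed

lemma F4: assumes "1 \<le> i" "i+1 \<le> k" "A i" "\<not> A (i-1)" "\<not> A (i+1)" shows False
proof -
  obtain x where x: "x \<in> S" "\<phi> x = i" "E v x" using getA assms(3) by blast
  have "i-1 \<le> k" using assms(2) k4 by linarith
  then obtain w where w: "w \<in> S" "\<phi> w = i-1" using rep by blast
  obtain u where u: "u \<in> S" "\<phi> u = i+1" using rep assms(2) by blast
  have vw: "\<not> E v w" using notA[OF assms(4) w] .
  have vu: "\<not> E v u" using notA[OF assms(5) u] .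
  show False
    by (rule no_claw[of x w v u]) (use x w u vw vu vS assms(1) in \<open>auto simp: adj\<close>)
qed

lemma F2a: assumes "A 0" "A k" "2 \<le> j" "j+2 \<le> k" "A j" shows False
proof -
  obtain x where x: "x \<in> S" "\<phi> x = 0" "E v x" using getA assms(1) by blast
  obtain y where y: "y \<in> S" "\<phi> y = k" "E v y" using getA assms(2) by blast
  obtain z where z: "z \<in> S" "\<phi> z = j" "E v z" using getA assms(5) by blast
  show False
    by (rule no_claw[of v x y z]) (use x y z assms(3,4) k4 in \<open>auto simp: adj\<close>)
qed

lemma F2b: assumes "A 0" "A k" "A 1" shows False
proof -
  obtain x where x: "x \<in> S" "\<phi> x = 0" "E v x" using getA assms(1) by blast
  obtain y where y: "y \<in> S" "\<phi> y = k" "E v y" using getA assms(2) by blast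
  obtain z where z: "z \<in> S" "\<phi> z = 1" "E v z" using getA assms(3) by blast
  have "2 \<le> k" using k4 k4 by linarith
  then obtain u where u: "u \<in> S" "\<phi> u = 2" using rep by blast
  have "\<not> A 2" using F2a[OF assms(1,2), of 2] k4 by auto
  hence vu: "\<not> E v u" using notA u by blast
  show False
    by (rule no_bull[of z v x u y]) (use x y z u vu k4 in \<open>auto simp: adj\<close>)
qed

lemma F2b': assumes "A 0" "A k" "A (k-1)" shows False
proof -
  obtain x where x: "x \<in> S" "\<phi> x = 0" "E v x" using getA assms(1) by blast
  obtain y where y: "y \<in> S" "\<phi> y = k" "E v y" using getA assms(2) by blast
  obtain z where z: "z \<in> S" "\<phi> z = k-1" "E v z" using getA assms(3) by blast
  have "k-2 \<le> k" using k4 by linarith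
  then obtain u where u: "u \<in> S" "\<phi> u = k-2" using rep by blast
  have "2 \<le> k-2" "k-2+2 \<le> k" using k4 by auto
  hence "\<not> A (k-2)" using F2a[OF assms(1,2)] by blast
  hence vu: "\<not> E v u" using notA u by blast
  show False
    by (rule no_bull[of z v y u x]) (use x y z u vu k4 in \<open>auto simp: adj\<close>)
qed

lemma F1: assumes "A i" "A j" "i+3 \<le> j" "\<forall>l<i. \<not> A l" shows "i = 0"
proof (rule ccontr)
  assume i0: "i \<noteq> 0"
  have jk: "j \<le> k" using A_bnd assms(2) .
  obtain x where x: "x \<in> S" "\<phi> x = i" "E v x" using getA assms(1) by blast
  obtain y where y: "y \<in> S" "\<phi> y = j" "E v y" using getA assms(2) by blast
  have "i-1 \<le> k" using jk assms(3) k4 by linarith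
  then obtain w where w: "w \<in> S" "\<phi> w = i-1" using rep by blast
  have "i+1 \<le> k" using jk assms(3) k4 by linarith
  then obtain u where u: "u \<in> S" "\<phi> u = i+1" using rep by blast
  have vw: "\<not> E v w" using notA[OF _ w] assms(4) i0 by auto
  show False
  proof (cases "E v u")
    case False
    show False
      by (rule no_claw[of x w v u]) (use x w u vw False vS i0 in \<open>auto simp: adj\<close>)
  next
    case True
    show False
      by (rule no_bull[of x v u w y]) (use x y w u vw True assms(3) i0 in \<open>auto simp: adj\<close>)
  qed
qed

lemma F1': assumes "A i" "A j" "i+3 \<le> j" "\<forall>l>j. \<not> A l" shows "j = k"
proof (rule ccontr)
  assume jk0: "j \<noteq> k"
  have jk: "j < k" using A_bnd assms(2) jk0 by fastforce
  obtain x where x: "x \<in> S" "\<phi> x = i" "E v x" using getA assms(1) by blast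
  obtain y where y: "y \<in> S" "\<phi> y = j" "E v y" using getA assms(2) by blast
  have "j+1 \<le> k" using jk k4 by linarith
  then obtain w where w: "w \<in> S" "\<phi> w = j+1" using rep by blast
  have "j-1 \<le> k" using jk k4 by linarith
  then obtain u where u: "u \<in> S" "\<phi> u = j-1" using rep by blast
  have vw: "\<not> E v w" using notA[OF _ w] assms(4) by auto
  show False
  proof (cases "E v u")
    case False
    show False
      by (rule no_claw[of y w v u]) (use y w u vw False vS assms(3) in \<open>auto simp: adj\<close>)
  next
    case True
    show False
      by (rule no_bull[of y v u w x]) (use x y w u vw True assms(3) in \<open>auto simp: adj\<close>)
  qed
qed


lemma char:
  assumes "\<And>j. A j \<Longrightarrow> P j" "\<And>j. j \<le> k \<Longrightarrow> P j \<Longrightarrow> N j"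
  shows "\<forall>x\<in>S. E v x \<longleftrightarrow> P (\<phi> x)"
proof
  fix x assume x: "x \<in> S"
  show "E v x \<longleftrightarrow> P (\<phi> x)"
  proof
    assume "E v x" hence "A (\<phi> x)" using x unfolding touch_def by blast
    thus "P (\<phi> x)" using assms(1) by blast
  next
    assume "P (\<phi> x)" hence "N (\<phi> x)" using assms(2) bnd[OF x] by blast
    thus "E v x" using x unfolding full_def by blast
  qed
qed

lemma extension:
  assumes ex: "\<exists>x\<in>S. E v x"
  shows "(\<exists>i\<le>k. \<forall>x\<in>S. E v x \<longleftrightarrow> (\<phi> x \<le> i+1 \<and> i \<le> \<phi> x + 1))
       \<or> (\<forall>x\<in>S. E v x \<longleftrightarrow> \<phi> x = 0) \<or> (\<forall>x\<in>S. E v x \<longleftrightarrow> \<phi> x = k)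
       \<or> (\<forall>x\<in>S. E v x \<longleftrightarrow> (\<phi> x = 0 \<or> \<phi> x = k))"
proof -
  define M where "M = {i. A i}"
  have Msub: "M \<subseteq> {0..k}" using A_bnd unfolding M_def by auto
  have Mfin: "finite M" using Msub finite_subset by blast
  have Mne: "M \<noteq> {}" using ex unfolding M_def touch_def by auto
  define lo where "lo = Min M"
  define hi where "hi = Max M"
  have Alo: "A lo" using Min_in[OF Mfin Mne] unfolding lo_def M_def by auto
  have Ahi: "A hi" using Max_in[OF Mfin Mne] unfolding hi_def M_def by auto
  have rng: "\<And>j. A j \<Longrightarrow> lo \<le> j \<and> j \<le> hi"
    using Min_le[OF Mfin] Max_ge[OF Mfin] unfolding lo_def hi_def M_def by auto
  have hik: "hi \<le> k" using A_bnd[OF Ahi] .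
  have lohi: "lo \<le> hi" using rng[OF Alo] by auto
  have below: "\<And>l. l < lo \<Longrightarrow> \<not> A l" using rng by force
  have above: "\<And>l. hi < l \<Longrightarrow> \<not> A l" using rng by force
  consider "lo+3 \<le> hi" | "hi = lo" | "hi = lo+1" | "hi = lo+2" using lohi by arith
  then show ?thesis
  proof cases
    case 1
    have lo0: "lo = 0" using F1[OF Alo Ahi 1] below by blast
    have hk: "hi = k" using F1'[OF Alo Ahi 1] above by blast
    have A0: "A 0" and Ak: "A k" using Alo Ahi lo0 hk by auto
    have noint: "\<not> A j" if j: "0 < j" "j < k" for j
    proof
      assume Aj: "A j"
      consider "j = 1" | "j = k-1" | "2 \<le> j \<and> j+2 \<le> k" using j by arith
      then show False
      proof cases
        case 1 then show False using F2b[OF A0 Ak] Aj by simp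
      next
        case 2 then show False using F2b'[OF A0 Ak] Aj by simp
      next
        case 3 then show False using F2a[OF A0 Ak _ _ Aj] by blast
      qed
    qed
    have n1: "\<not> A 1" using noint[of 1] k4 by auto
    have n2: "\<not> A 2" using noint[of 2] k4 by auto
    have n1': "\<not> A (0+1)" and n2': "\<not> A (0+2)" using n1 n2 by (simp only: add_0)+
    have N0: "N 0" by (rule F3[OF _ A0 n1' n2']) (use k4 in simp)
    have "\<not> A (k-1)" "\<not> A (k-2)" using noint[of "k-1"] noint[of "k-2"] k4 by auto
    moreover have "2 \<le> k" using k4 by simp
    ultimately have Nk: "N k" using F9b[of k, OF _ Ak] by blast
    have "\<forall>x\<in>S. E v x \<longleftrightarrow> (\<lambda>j. j = 0 \<or> j = k) (\<phi> x)"
    proof (rule char)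
      fix j :: nat assume "A j" thus "j = 0 \<or> j = k" using noint A_bnd by fastforce
    next
      fix j :: nat assume "j = 0 \<or> j = k" thus "N j" using N0 Nk by blast
    qed
    thus ?thesis by simp
  next
    case 2
    have only: "\<And>j. A j \<Longrightarrow> j = lo" using rng 2 by force
    consider "lo = 0" | "lo = k" | "1 \<le> lo \<and> lo+1 \<le> k" using hik 2 by arith
    then show ?thesis
    proof cases
      case 1
      have n1: "\<not> A 1" using only[of 1] 1 by auto
      have n2: "\<not> A 2" using only[of 2] 1 by auto
      have n1': "\<not> A (0+1)" and n2': "\<not> A (0+2)" using n1 n2 by (simp only: add_0)+
      have A0: "A 0" using Alo 1 by simp
      have N0: "N 0" by (rule F3[OF _ A0 n1' n2']) (use k4 in simp)
      have "\<forall>x\<in>S. E v x \<longleftrightarrow> (\<lambda>j. j = 0) (\<phi> x)"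
        by (rule char) (use only 1 N0 in auto)
      thus ?thesis by simp
    next
      case 2
      have "\<not> A (k-1)" using only[of "k-1"] 2 k4 by auto
      moreover have "\<not> A (k-2)" using only[of "k-2"] 2 k4 by auto
      ultimately
      have Nk: "N k" using F9b[of k] Alo 2 k4 by auto
      have "\<forall>x\<in>S. E v x \<longleftrightarrow> (\<lambda>j. j = k) (\<phi> x)"
        by (rule char) (use only 2 Nk in auto)
      thus ?thesis by simp
    next
      case 3
      have "\<not> A (lo-1)" using only[of "lo-1"] 3 by auto
      moreover have "\<not> A (lo+1)" using only[of "lo+1"] by auto
      ultimately have False using F4[of lo] Alo 3 by blast
      thus ?thesis ..
    qed
  next
    case 3
    have only: "\<And>j. A j \<Longrightarrow> j = lo \<or> j = lo+1" using rng 3 by force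
    consider "lo = 0" | "hi = k" | "1 \<le> lo \<and> hi+1 \<le> k" using hik 3 by arith
    then show ?thesis
    proof cases
      case 1
      have A1: "A 1" using Ahi 3 1 by simp
      have n2: "\<not> A 2" "\<not> A 3" using only[of 2] only[of 3] 1 by auto
      have N0: "N 0" by (rule F6[OF A1 n2(1)])
      have N1: "N 1" by (rule F7[OF A1 n2])
      have "\<forall>x\<in>S. E v x \<longleftrightarrow> (\<lambda>j. j \<le> 0+1 \<and> 0 \<le> j+1) (\<phi> x)"
      proof (rule char)
        fix j :: nat assume "A j" thus "j \<le> 0+1 \<and> 0 \<le> j+1" using only 1 by fastforce
      next
        fix j :: nat assume "j \<le> 0+1 \<and> 0 \<le> j+1" hence "j = 0 \<or> j = 1" by arith
        thus "N j" using N0 N1 by blast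
      qed
      hence "\<forall>x\<in>S. E v x \<longleftrightarrow> (\<phi> x \<le> 0+1 \<and> 0 \<le> \<phi> x+1)" by simp
      thus ?thesis by blast
    next
      case 2
      have A1: "A (k-1)" using Alo 3 2 by simp
      have n2: "\<not> A (k-2)" "\<not> A (k-3)" using only[of "k-2"] only[of "k-3"] 2 3 k4 by auto
      have Nk: "N k" by (rule F6'[OF A1 n2(1)])
      have N1: "N (k-1)" by (rule F7'[OF A1 n2])
      have "\<forall>x\<in>S. E v x \<longleftrightarrow> (\<lambda>j. j \<le> k+1 \<and> k \<le> j+1) (\<phi> x)"
      proof (rule char)
        fix j :: nat assume "A j" thus "j \<le> k+1 \<and> k \<le> j+1" using only 2 3 by fastforce
      next
        fix j :: nat assume "j \<le> k" "j \<le> k+1 \<and> k \<le> j+1" hence "j = k \<or> j = k-1" by arith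
        thus "N j" using Nk N1 by blast
      qed
      hence "\<forall>x\<in>S. E v x \<longleftrightarrow> (\<phi> x \<le> k+1 \<and> k \<le> \<phi> x+1)" by simp
      thus ?thesis by blast
    next
      case 4: 3
      have "\<not> A (lo-1)" using only[of "lo-1"] 4 by auto
      moreover have "\<not> A (lo+2)" using only[of "lo+2"] by auto
      moreover have "lo+2 \<le> k" "A (lo+1)" using 3 4 Ahi by auto
      ultimately have False using F5[of lo] Alo 4 by blast
      thus ?thesis ..
    qed
  next
    case 4
    have only: "\<And>j. A j \<Longrightarrow> lo \<le> j \<and> j \<le> lo+2" using rng 4 by force
    have Nmid: "N (lo+1)"
    proof (rule ccontr)
      assume nm: "\<not> N (lo+1)"
      show False
      proof (cases "1 \<le> lo")
        case True
        have "\<not> A (lo-1)" using below[of "lo-1"] True by auto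
        moreover have "lo+1 \<le> k" using hik 4 by auto
        ultimately show False using F8a[of lo] True Alo nm by blast
      next
        case False
        hence l0: "lo = 0" by simp
        have "\<not> A 3" using above[of 3] l0 4 by auto
        moreover have "A 2" using Ahi l0 4 by (auto simp: numeral_2_eq_2)
        moreover have "2+1 \<le> k" using k4 by auto
        ultimately show False using F8a'[of 2] nm l0 by auto
      qed
    qed
    have Nlo: "N lo"
    proof (cases "lo+3 \<le> k")
      case True
      have "\<not> A (lo+3)" using above[of "lo+3"] 4 by auto
      moreover have "A (lo+2)" using Ahi 4 by auto
      ultimately show ?thesis using F9a[OF True Nmid] by blast
    next
      case False
      hence "lo \<ge> 2" using k4 hik 4 by arith
      have "\<not> A (lo-1)" "\<not> A (lo-2)" using below[of "lo-1"] below[of "lo-2"] \<open>lo \<ge> 2\<close> by auto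
      thus ?thesis using F9b[OF \<open>lo \<ge> 2\<close> Alo] by blast
    qed
    have Nhi: "N hi"
    proof (cases "3 \<le> hi")
      case True
      have "\<not> A (hi-3)" using below[of "hi-3"] 4 True by auto
      moreover have "A (hi-2)" "N (hi-1)" using Alo Nmid 4 by auto
      ultimately show ?thesis using F9a'[OF True hik] by blast
    next
      case False
      hence "hi = 2" "lo = 0" using 4 by arith+
      have "\<not> A (2+1)" "\<not> A (2+2)" using above[of 3] above[of 4] \<open>hi = 2\<close> by auto
      moreover have "2+2 \<le> k" using k4 by auto
      ultimately show ?thesis using F3[of 2] Ahi \<open>hi = 2\<close> by auto
    qed
    have "\<forall>x\<in>S. E v x \<longleftrightarrow> (\<lambda>j. j \<le> (lo+1)+1 \<and> lo+1 \<le> j+1) (\<phi> x)"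
    proof (rule char)
      fix j :: nat assume "A j" thus "j \<le> (lo+1)+1 \<and> lo+1 \<le> j+1" using only by fastforce
    next
      fix j :: nat assume "j \<le> (lo+1)+1 \<and> lo+1 \<le> j+1" hence "j = lo \<or> j = lo+1 \<or> j = hi" using 4 by arith
      thus "N j" using Nlo Nmid Nhi by blast
    qed
    hence "\<forall>x\<in>S. E v x \<longleftrightarrow> (\<phi> x \<le> (lo+1)+1 \<and> lo+1 \<le> \<phi> x+1)" by simp
    moreover have "lo+1 \<le> k" using 4 hik by arith
    ultimately show ?thesis by blast
  qed
qed

end


definition PE :: "('a \<Rightarrow> 'a \<Rightarrow> bool) \<Rightarrow> 'a set \<Rightarrow> nat \<Rightarrow> ('a \<Rightarrow> nat) \<Rightarrow> bool" where
  "PE E S k \<phi> \<longleftrightarrow> \<phi> ` S = {0..k} \<and>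
     (\<forall>x\<in>S. \<forall>y\<in>S. E x y \<longleftrightarrow> (x \<noteq> y \<and> \<phi> x \<le> \<phi> y + 1 \<and> \<phi> y \<le> \<phi> x + 1))"

context cbg
begin

lemma PE_path: assumes "PE E S k \<phi>" shows "expansion_of S E (path_V k) (path_E k)"
proof -
  have b: "\<And>x. x \<in> S \<Longrightarrow> \<phi> x \<le> k" using assms unfolding PE_def by auto
  have "\<forall>x\<in>S. \<forall>y\<in>S. x \<noteq> y \<longrightarrow> (E x y \<longleftrightarrow> \<phi> x = \<phi> y \<or> path_E k (\<phi> x) (\<phi> y))"
  proof (intro ballI impI)
    fix x y assume xy: "x \<in> S" "y \<in> S" "x \<noteq> y"
    have "E x y \<longleftrightarrow> (\<phi> x \<le> \<phi> y + 1 \<and> \<phi> y \<le> \<phi> x + 1)" using assms xy unfolding PE_def by auto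
    also have "\<dots> \<longleftrightarrow> \<phi> x = \<phi> y \<or> path_E k (\<phi> x) (\<phi> y)"
      using b[OF xy(1)] b[OF xy(2)] unfolding path_E_def by arith
    finally show "E x y \<longleftrightarrow> \<phi> x = \<phi> y \<or> path_E k (\<phi> x) (\<phi> y)" .
  qed
  moreover have "\<phi> ` S = path_V k" using assms unfolding PE_def path_V_def by auto
  ultimately show ?thesis unfolding expansion_of_def by blast
qed

lemma PE_pexp: "PE E S k \<phi> \<Longrightarrow> S \<subseteq> V \<Longrightarrow> 4 \<le> k \<Longrightarrow> v \<notin> S \<Longrightarrow> pexp V E S k \<phi> v"
  unfolding PE_def by unfold_locales (use gr cbf in auto)

lemma ext_A:
  assumes pe: "PE E S k \<phi>" and vS: "v \<notin> S" and i: "i \<le> k"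
    and nb: "\<forall>x\<in>S. E v x \<longleftrightarrow> (\<phi> x \<le> i+1 \<and> i \<le> \<phi> x + 1)"
  shows "PE E (insert v S) k (\<phi>(v:=i))"
proof -
  have im: "\<phi> ` S = {0..k}" and ad: "\<forall>x\<in>S. \<forall>y\<in>S. E x y \<longleftrightarrow> (x \<noteq> y \<and> \<phi> x \<le> \<phi> y + 1 \<and> \<phi> y \<le> \<phi> x + 1)"
    using pe unfolding PE_def by auto
  have "(\<phi>(v:=i)) ` insert v S = insert i (\<phi> ` S)" using vS by auto
  also have "\<dots> = {0..k}" using im i by auto
  finally have 1: "(\<phi>(v:=i)) ` insert v S = {0..k}" .
  have 2: "\<forall>x\<in>insert v S. \<forall>y\<in>insert v S. E x y \<longleftrightarrow> (x \<noteq> y \<and> (\<phi>(v:=i)) x \<le> (\<phi>(v:=i)) y + 1 \<and> (\<phi>(v:=i)) y \<le> (\<phi>(v:=i)) x + 1)"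
  proof (intro ballI)
    fix x y assume x: "x \<in> insert v S" and y: "y \<in> insert v S"
    show "E x y \<longleftrightarrow> (x \<noteq> y \<and> (\<phi>(v:=i)) x \<le> (\<phi>(v:=i)) y + 1 \<and> (\<phi>(v:=i)) y \<le> (\<phi>(v:=i)) x + 1)"
    proof (cases "x = v")
      case True
      show ?thesis
      proof (cases "y = v")
        case True thus ?thesis using \<open>x = v\<close> irr by simp
      next
        case False thus ?thesis using \<open>x = v\<close> y nb vS by auto
      qed
    next
      case False
      show ?thesis
      proof (cases "y = v")
        case True
        have "E x y \<longleftrightarrow> E y x" using sym by blast
        thus ?thesis using True False x nb vS by auto
      next
        case False thus ?thesis using \<open>x \<noteq> v\<close> x y ad vS by auto
      qed
    qed
  qed
  show ?thesis using 1 2 unfolding PE_def by blast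
qed

lemma ext_B:
  assumes pe: "PE E S k \<phi>" and vS: "v \<notin> S"
    and nb: "\<forall>x\<in>S. E v x \<longleftrightarrow> \<phi> x = 0"
  shows "PE E (insert v S) (k+1) (\<lambda>x. if x = v then 0 else \<phi> x + 1)"
proof -
  let ?p = "\<lambda>x. if x = v then 0 else \<phi> x + 1"
  have im: "\<phi> ` S = {0..k}" and ad: "\<forall>x\<in>S. \<forall>y\<in>S. E x y \<longleftrightarrow> (x \<noteq> y \<and> \<phi> x \<le> \<phi> y + 1 \<and> \<phi> y \<le> \<phi> x + 1)"
    using pe unfolding PE_def by auto
  have 1: "?p ` insert v S = {0..k+1}"
  proof
    show "?p ` insert v S \<subseteq> {0..k+1}" using im vS by auto
  next
    show "{0..k+1} \<subseteq> ?p ` insert v S"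
    proof
      fix n assume n: "n \<in> {0..k+1}"
      show "n \<in> ?p ` insert v S"
      proof (cases "n = 0")
        case True thus ?thesis by force
      next
        case False
        hence "n - 1 \<in> \<phi> ` S" using im n by auto
        then obtain x where "x \<in> S" "\<phi> x = n - 1" by auto
        hence "n = ?p x" "x \<in> insert v S" using vS False by auto
        thus ?thesis by (rule image_eqI)
      qed
    qed
  qed
  have 2: "\<forall>x\<in>insert v S. \<forall>y\<in>insert v S. E x y \<longleftrightarrow> (x \<noteq> y \<and> ?p x \<le> ?p y + 1 \<and> ?p y \<le> ?p x + 1)"
  proof (intro ballI)
    fix x y assume x: "x \<in> insert v S" and y: "y \<in> insert v S"
    show "E x y \<longleftrightarrow> (x \<noteq> y \<and> ?p x \<le> ?p y + 1 \<and> ?p y \<le> ?p x + 1)"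
    proof (cases "x = v")
      case True
      show ?thesis
      proof (cases "y = v")
        case True thus ?thesis using \<open>x = v\<close> irr by simp
      next
        case False thus ?thesis using \<open>x = v\<close> y nb vS by auto
      qed
    next
      case False
      show ?thesis
      proof (cases "y = v")
        case True
        have "E x y \<longleftrightarrow> E y x" using sym by blast
        thus ?thesis using True False x nb vS by auto
      next
        case False thus ?thesis using \<open>x \<noteq> v\<close> x y ad vS by auto
      qed
    qed
  qed
  show ?thesis using 1 2 unfolding PE_def by blast
qed

lemma ext_C:
  assumes pe: "PE E S k \<phi>" and vS: "v \<notin> S"
    and nb: "\<forall>x\<in>S. E v x \<longleftrightarrow> \<phi> x = k"
  shows "PE E (insert v S) (k+1) (\<phi>(v:=k+1))"
proof -
  have im: "\<phi> ` S = {0..k}" and ad: "\<forall>x\<in>S. \<forall>y\<in>S. E x y \<longleftrightarrow> (x \<noteq> y \<and> \<phi> x \<le> \<phi> y + 1 \<and> \<phi> y \<le> \<phi> x + 1)"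
    using pe unfolding PE_def by auto
  have b: "\<And>x. x \<in> S \<Longrightarrow> \<phi> x \<le> k" using im by auto
  have "(\<phi>(v:=k+1)) ` insert v S = insert (k+1) (\<phi> ` S)" using vS by auto
  also have "\<dots> = {0..k+1}" using im by auto
  finally have 1: "(\<phi>(v:=k+1)) ` insert v S = {0..k+1}" .
  have 2: "\<forall>x\<in>insert v S. \<forall>y\<in>insert v S. E x y \<longleftrightarrow> (x \<noteq> y \<and> (\<phi>(v:=k+1)) x \<le> (\<phi>(v:=k+1)) y + 1 \<and> (\<phi>(v:=k+1)) y \<le> (\<phi>(v:=k+1)) x + 1)"
  proof (intro ballI)
    fix x y assume x: "x \<in> insert v S" and y: "y \<in> insert v S"
    show "E x y \<longleftrightarrow> (x \<noteq> y \<and> (\<phi>(v:=k+1)) x \<le> (\<phi>(v:=k+1)) y + 1 \<and> (\<phi>(v:=k+1)) y \<le> (\<phi>(v:=k+1)) x + 1)"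
    proof (cases "x = v")
      case True
      show ?thesis
      proof (cases "y = v")
        case True thus ?thesis using \<open>x = v\<close> irr by simp
      next
        case False
        hence "y \<in> S" using y by auto
        thus ?thesis using \<open>x = v\<close> False nb vS b[of y] by auto
      qed
    next
      case False
      hence xS: "x \<in> S" using x by auto
      show ?thesis
      proof (cases "y = v")
        case True
        have "E x y \<longleftrightarrow> E y x" using sym by blast
        thus ?thesis using True False xS nb vS b[of x] by auto
      next
        case False thus ?thesis using \<open>x \<noteq> v\<close> x y ad vS by auto
      qed
    qed
  qed
  show ?thesis using 1 2 unfolding PE_def by blast
qed

end


context cbg
begin

lemma entry:
  assumes conn: "connected_graph V E" and T: "T \<subseteq> V" "t0 \<in> T"
    and c: "c \<in> V" "c \<notin> T" "\<forall>t\<in>T. \<not> E c t"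
  shows "\<exists>z y. E z y \<and> z \<notin> T \<and> (\<forall>t\<in>T. \<not> E z t) \<and> y \<notin> T \<and> (\<exists>t\<in>T. E y t)"
proof -
  have r: "E\<^sup>*\<^sup>* c t0" using conn c T unfolding connected_graph_def by blast
  have "E\<^sup>*\<^sup>* c s \<Longrightarrow> s \<in> T \<or> (\<exists>t\<in>T. E s t) \<Longrightarrow> ?thesis" for s
  proof (induction rule: rtranclp_induct)
    case base thus ?case using c by blast
  next
    case (step s s')
    show ?case
    proof (cases "s \<in> T \<or> (\<exists>t\<in>T. E s t)")
      case True thus ?thesis using step.IH by blast
    next
      case False
      have "s' \<notin> T" using False step.hyps(2) by blast
      hence "\<exists>t\<in>T. E s' t" using step.prems by blast
      thus ?thesis using False step.hyps(2) \<open>s' \<notin> T\<close> by blast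
    qed
  qed
  thus ?thesis using r T by blast
qed

lemma PE_facts:
  assumes "PE E S k \<phi>"
  shows "\<And>x y. x \<in> S \<Longrightarrow> y \<in> S \<Longrightarrow> E x y \<longleftrightarrow> (x \<noteq> y \<and> \<phi> x \<le> \<phi> y + 1 \<and> \<phi> y \<le> \<phi> x + 1)"
    and "\<And>x. x \<in> S \<Longrightarrow> \<phi> x \<le> k"
    and "\<And>i. i \<le> k \<Longrightarrow> \<exists>x\<in>S. \<phi> x = i"
  using assms unfolding PE_def by (auto, metis atLeastAtMost_iff imageE zero_le)

lemma close_cycle:
  assumes conn: "connected_graph V E" and pe: "PE E S k \<phi>" and SV: "S \<subseteq> V" and k4: "4 \<le> k"
    and ne: "S \<noteq> V"
    and cl: "\<forall>w\<in>V-S. (\<exists>x\<in>S. E w x) \<longrightarrow> (\<forall>x\<in>S. E w x \<longleftrightarrow> (\<phi> x = 0 \<or> \<phi> x = k))"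
  shows "expansion_of V E (cycle_V (k+2)) (cycle_E (k+2))"
proof -
  note ad = PE_facts(1)[OF pe] and bd = PE_facts(2)[OF pe] and rp = PE_facts(3)[OF pe]
  obtain r0 where r0: "r0 \<in> S" "\<phi> r0 = 0" using rp[of 0] by auto
  obtain r1 where r1: "r1 \<in> S" "\<phi> r1 = 1" using rp[of 1] k4 by auto
  obtain rk where rk: "rk \<in> S" "\<phi> rk = k" using rp[of k] by auto
  have alladj: "\<exists>x\<in>S. E w x" if w: "w \<in> V - S" for w
  proof (rule ccontr)
    assume "\<not> (\<exists>x\<in>S. E w x)"
    then obtain z y where zy: "E z y" "z \<notin> S" "\<forall>t\<in>S. \<not> E z t" "y \<notin> S" "\<exists>t\<in>S. E y t"
      using entry[OF conn SV r0(1), of w] w by blast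
    have yV: "y \<in> V" using inV(2)[OF zy(1)] .
    have ycl: "\<forall>x\<in>S. E y x \<longleftrightarrow> (\<phi> x = 0 \<or> \<phi> x = k)" using cl yV zy(4,5) by blast
    have "E y z" using sym zy(1) by blast
    moreover have "E y r0" "E y rk" using ycl r0 rk by auto
    moreover have "\<not> E z r0" "\<not> E z rk" using zy(3) r0 rk by auto
    moreover have "\<not> E r0 rk" using ad[OF r0(1) rk(1)] r0 rk k4 by auto
    moreover have "z \<noteq> r0" "z \<noteq> rk" "r0 \<noteq> rk" using zy(2) r0 rk k4 by auto
    ultimately show False using no_claw[of y z r0 rk] by blast
  qed
  have clW: "\<And>w. w \<in> V - S \<Longrightarrow> \<forall>x\<in>S. E w x \<longleftrightarrow> (\<phi> x = 0 \<or> \<phi> x = k)"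
    using cl alladj by blast
  have clique: "E w w'" if w: "w \<in> V - S" "w' \<in> V - S" "w \<noteq> w'" for w w'
  proof (rule ccontr)
    assume nw: "\<not> E w w'"
    have "E r0 w" "E r0 w'" using clW[OF w(1)] clW[OF w(2)] r0 sym by blast+
    moreover have "E r0 r1" using ad[OF r0(1) r1(1)] r0 r1 by auto
    moreover have "\<not> E w r1" "\<not> E w' r1" using clW[OF w(1)] clW[OF w(2)] r1 k4 by auto
    moreover have "w \<noteq> r1" "w' \<noteq> r1" using w r1 by auto
    ultimately show False using no_claw[of r0 w w' r1] nw w(3) by blast
  qed
  define \<psi> where "\<psi> = (\<lambda>x. if x \<in> S then \<phi> x else k+1)"
  have im: "\<psi> ` V = cycle_V (k+2)"
  proof
    show "\<psi> ` V \<subseteq> cycle_V (k+2)" using bd unfolding \<psi>_def cycle_V_def by fastforce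
  next
    show "cycle_V (k+2) \<subseteq> \<psi> ` V"
    proof
      fix n assume n: "n \<in> cycle_V (k+2)"
      show "n \<in> \<psi> ` V"
      proof (cases "n \<le> k")
        case True
        then obtain x where "x \<in> S" "\<phi> x = n" using rp by blast
        hence "n = \<psi> x" "x \<in> V" using SV unfolding \<psi>_def by auto
        thus ?thesis by (rule image_eqI)
      next
        case False
        hence n1: "n = k+1" using n unfolding cycle_V_def by auto
        obtain w where "w \<in> V" "w \<notin> S" using ne SV by blast
        hence "n = \<psi> w" "w \<in> V" using n1 unfolding \<psi>_def by auto
        thus ?thesis by (rule image_eqI)
      qed
    qed
  qed
  have ed: "E x y \<longleftrightarrow> \<psi> x = \<psi> y \<or> cycle_E (k+2) (\<psi> x) (\<psi> y)"
    if xy: "x \<in> V" "y \<in> V" "x \<noteq> y" for x y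
  proof (cases "x \<in> S")
    case xS: True
    show ?thesis
    proof (cases "y \<in> S")
      case True
      have "E x y \<longleftrightarrow> (\<phi> x \<le> \<phi> y + 1 \<and> \<phi> y \<le> \<phi> x + 1)" using ad[OF xS True] xy by auto
      thus ?thesis using bd[OF xS] bd[OF True] xS True unfolding \<psi>_def cycle_E_iff by auto
    next
      case False
      have "E x y \<longleftrightarrow> E y x" using sym by blast
      also have "\<dots> \<longleftrightarrow> (\<phi> x = 0 \<or> \<phi> x = k)" using clW[of y] False xy xS by blast
      finally show ?thesis using bd[OF xS] xS False unfolding \<psi>_def cycle_E_iff by auto
    qed
  next
    case xS: False
    show ?thesis
    proof (cases "y \<in> S")
      case True
      have "E x y \<longleftrightarrow> (\<phi> y = 0 \<or> \<phi> y = k)" using clW[of x] True xy xS by blast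
      thus ?thesis using bd[OF True] xS True unfolding \<psi>_def cycle_E_iff by auto
    next
      case False
      have "E x y" using clique xy xS False by blast
      thus ?thesis using xS False unfolding \<psi>_def by auto
    qed
  qed
  show ?thesis unfolding expansion_of_def using im ed by blast
qed

end


context cbg
begin

lemma finV: "finite V" using gr unfolding graph_def by blast

lemma grow:
  assumes conn: "connected_graph V E"
  shows "PE E S k \<phi> \<Longrightarrow> S \<subseteq> V \<Longrightarrow> 4 \<le> k \<Longrightarrow>
    (\<exists>k\<ge>4. expansion_of V E (path_V k) (path_E k)) \<or> (\<exists>k\<ge>6. expansion_of V E (cycle_V k) (cycle_E k))"
proof (induction "card (V - S)" arbitrary: S k \<phi> rule: less_induct)
  case less
  show ?case
  proof (cases "S = V")
    case True
    thus ?thesis using PE_path[OF less.prems(1)] less.prems(3) by blast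
  next
    case False
    show ?thesis
    proof (cases "\<exists>v\<in>V-S. (\<exists>x\<in>S. E v x) \<and> ((\<exists>i\<le>k. \<forall>x\<in>S. E v x \<longleftrightarrow> (\<phi> x \<le> i+1 \<and> i \<le> \<phi> x + 1))
        \<or> (\<forall>x\<in>S. E v x \<longleftrightarrow> \<phi> x = 0) \<or> (\<forall>x\<in>S. E v x \<longleftrightarrow> \<phi> x = k))")
      case True
      then obtain v where v: "v \<in> V" "v \<notin> S" and
        d: "(\<exists>i\<le>k. \<forall>x\<in>S. E v x \<longleftrightarrow> (\<phi> x \<le> i+1 \<and> i \<le> \<phi> x + 1))
        \<or> (\<forall>x\<in>S. E v x \<longleftrightarrow> \<phi> x = 0) \<or> (\<forall>x\<in>S. E v x \<longleftrightarrow> \<phi> x = k)" by blast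
      have sub: "insert v S \<subseteq> V" using v less.prems(2) by blast
      have lt: "card (V - insert v S) < card (V - S)"
      proof -
        have "V - insert v S \<subset> V - S" using v by blast
        thus ?thesis using finV by (meson finite_Diff psubset_card_mono)
      qed
      have "\<exists>k' \<psi>. PE E (insert v S) k' \<psi> \<and> 4 \<le> k'"
        using d ext_A[OF less.prems(1) v(2)] ext_B[OF less.prems(1) v(2)] ext_C[OF less.prems(1) v(2)]
          less.prems(3) by (meson le_add1 le_trans)
      then obtain k' \<psi> where "PE E (insert v S) k' \<psi>" "4 \<le> k'" by blast
      thus ?thesis using less.hyps[OF lt _ sub] by blast
    next
      case False
      have cl: "\<forall>w\<in>V-S. (\<exists>x\<in>S. E w x) \<longrightarrow> (\<forall>x\<in>S. E w x \<longleftrightarrow> (\<phi> x = 0 \<or> \<phi> x = k))"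
      proof (rule ballI, rule impI)
        fix w assume w: "w \<in> V - S" and ex: "\<exists>x\<in>S. E w x"
        have "pexp V E S k \<phi> w" using PE_pexp[OF less.prems(1,2,3)] w by blast
        from pexp.extension[OF this ex] False w ex
        show "\<forall>x\<in>S. E w x \<longleftrightarrow> (\<phi> x = 0 \<or> \<phi> x = k)" by blast
      qed
      have "expansion_of V E (cycle_V (k+2)) (cycle_E (k+2))"
        using close_cycle[OF conn less.prems(1,2,3) \<open>S \<noteq> V\<close> cl] .
      moreover have "6 \<le> k+2" using less.prems(3) by simp
      ultimately show ?thesis by blast
    qed
  qed
qed

lemma mkP5:
  assumes "E a b" "E b c" "E c d" "E d e" "\<not>E a c" "\<not>E a d" "\<not>E a e" "\<not>E b d" "\<not>E b e" "\<not>E c e"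
    "a \<noteq> c" "b \<noteq> d" "c \<noteq> e"
  shows "\<exists>S \<phi>. S \<subseteq> V \<and> PE E S 4 \<phi>"
proof -
  have s: "E b a" "E c b" "E d c" "E e d" "\<not>E c a" "\<not>E d a" "\<not>E e a" "\<not>E d b" "\<not>E e b" "\<not>E e c"
    using assms sym by metis+
  have ne: "a\<noteq>b" "a\<noteq>d" "a\<noteq>e" "b\<noteq>c" "b\<noteq>e" "c\<noteq>d" "d\<noteq>e"
    using assms s irr by metis+
  define \<phi> :: "'a \<Rightarrow> nat" where "\<phi> = (\<lambda>x. if x = a then 0 else if x = b then 1 else if x = c then 2 else if x = d then 3 else 4)"
  have ph: "\<phi> a = 0" "\<phi> b = 1" "\<phi> c = 2" "\<phi> d = 3" "\<phi> e = 4"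
    using ne assms(11-13) unfolding \<phi>_def by auto
  have im: "\<phi> ` {a,b,c,d,e} = {0..4}"
  proof -
    have "\<phi> ` {a,b,c,d,e} = {0,1,2,3,4}" using ph by auto
    also have "\<dots> = {0..4}" by auto
    finally show ?thesis .
  qed
  have ed: "\<forall>x\<in>{a,b,c,d,e}. \<forall>y\<in>{a,b,c,d,e}. E x y \<longleftrightarrow> (x \<noteq> y \<and> \<phi> x \<le> \<phi> y + 1 \<and> \<phi> y \<le> \<phi> x + 1)"
    using assms s ne irr ph by auto
  have "{a,b,c,d,e} \<subseteq> V" using assms(1,2,4) inV by auto
  thus ?thesis using im ed unfolding PE_def by blast
qed

end


context cbg
begin

lemma p5_from_p3:
  assumes conn: "connected_graph V E" and px: "E p x" "E x q" "\<not>E p q" "p \<noteq> q"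
    and c: "c \<in> V" "c \<notin> {p,x,q}" "\<not>E c p" "\<not>E c x" "\<not>E c q"
  shows "\<exists>S \<phi>. S \<subseteq> V \<and> PE E S 4 \<phi>"
proof -
  have T: "{p,x,q} \<subseteq> V" using px inV by auto
  have "\<forall>t\<in>{p,x,q}. \<not> E c t" using c by auto
  then obtain z y where zy: "E z y" "z \<notin> {p,x,q}" "\<forall>t\<in>{p,x,q}. \<not>E z t" "y \<notin> {p,x,q}" "\<exists>t\<in>{p,x,q}. E y t"
    using entry[OF conn T, of p c] c by blast
  have z: "\<not>E z p" "\<not>E z x" "\<not>E z q" "\<not>E p z" "\<not>E x z" "\<not>E q z" "z \<noteq> p" "z \<noteq> x" "z \<noteq> q"
    using zy(2,3) sym by auto
  have y: "y \<noteq> p" "y \<noteq> x" "y \<noteq> q" "E y z" using zy(4) zy(1) sym by auto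
  have s: "E x p" "E q x" "\<not> E q p" using px sym by auto
  show ?thesis
  proof (cases "E y x")
    case yx: True
    hence xy: "E x y" using sym by blast
    show ?thesis
    proof (cases "E y p")
      case yp: True
      hence py: "E p y" using sym by blast
      show ?thesis
      proof (cases "E y q")
        case True
        have False by (rule no_claw[of y p q z]) (use yp True y z px in auto)
        thus ?thesis ..
      next
        case False
        hence "\<not> E q y" using sym by blast
        have False by (rule no_bull[of x y p q z]) (use xy yp s px y z False in auto)
        thus ?thesis ..
      qed
    next
      case yp: False
      hence py: "\<not> E p y" using sym by blast
      show ?thesis
      proof (cases "E y q")
        case True
        have False by (rule no_bull[of x y q p z]) (use xy True s px y z yp py in auto)
        thus ?thesis ..
      next
        case False
        hence "\<not> E q y" using sym by blast
        have False by (rule no_claw[of x p q y]) (use s px xy py False \<open>\<not> E q y\<close> y in auto)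
        thus ?thesis ..
      qed
    qed
  next
    case yx: False
    hence xy: "\<not> E x y" using sym by blast
    have yo: "E y p \<or> E y q" using zy(5) yx by auto
    show ?thesis
    proof (cases "E y p \<and> E y q")
      case True
      have False by (rule no_claw[of y p q z]) (use True y z px in auto)
      thus ?thesis ..
    next
      case False
      show ?thesis
      proof (cases "E y p")
        case True
        hence nq: "\<not> E y q" using False by blast
        show ?thesis by (rule mkP5[of z y p x q]) (use zy(1) True px s z nq yx y in auto)
      next
        case nyp: False
        hence yq: "E y q" using yo by blast
        show ?thesis by (rule mkP5[of z y q x p]) (use zy(1) yq px s z nyp yx y in auto)
      qed
    qed
  qed
qed

lemma p5_pair:
  assumes conn: "connected_graph V E" and "E x a" "E x b" "c \<in> V" "a \<noteq> b" "a \<noteq> c" "b \<noteq> c"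
    "\<not>E a b" "\<not>E a c" "\<not>E b c"
  shows "\<exists>S \<phi>. S \<subseteq> V \<and> PE E S 4 \<phi>"
proof -
  have "E a x" using assms(2) sym by blast
  have cx: "c \<noteq> x" using assms(2,9) sym by blast
  have ncx: "\<not> E c x"
  proof
    assume "E c x" hence "E x c" using sym by blast
    show False by (rule no_claw[of x a b c]) (use assms \<open>E x c\<close> in auto)
  qed
  have "\<not> E c a" "\<not> E c b" using assms sym by blast+
  thus ?thesis using p5_from_p3[OF conn \<open>E a x\<close> assms(3) assms(8) assms(5) assms(4)] assms cx ncx by auto
qed

lemma p5:
  assumes conn: "connected_graph V E" and V: "a\<in>V" "b\<in>V" "c\<in>V" and ne: "a\<noteq>b" "a\<noteq>c" "b\<noteq>c"
    and ind: "\<not>E a b" "\<not>E a c" "\<not>E b c"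
  shows "\<exists>S \<phi>. S \<subseteq> V \<and> PE E S 4 \<phi>"
proof -
  have ind': "\<not>E b a" "\<not>E c a" "\<not>E c b" using ind sym by blast+
  show ?thesis
  proof (cases "\<exists>x. E x a \<and> E x b")
    case True
    then obtain x where "E x a" "E x b" by blast
    thus ?thesis using p5_pair[OF conn _ _ V(3)] ne ind by blast
  next
    case nab: False
    show ?thesis
    proof (cases "\<exists>x. E x a \<and> E x c")
      case True
      then obtain x where "E x a" "E x c" by blast
      thus ?thesis using p5_pair[OF conn _ _ V(2)] ne ind ind' by blast
    next
      case nac: False
      show ?thesis
      proof (cases "\<exists>x. E x b \<and> E x c")
        case True
        then obtain x where "E x b" "E x c" by blast
        thus ?thesis using p5_pair[OF conn _ _ V(1)] ne ind ind' by blast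
      next
        case nbc: False
        have T: "{a} \<subseteq> V" using V by auto
        obtain z y where zy: "E z y" "z \<noteq> a" "\<not> E z a" "y \<noteq> a" "E y a"
          using entry[OF conn T, of a b] V ne ind' by blast
        have ay: "E a y" using zy sym by blast
        have yz: "E y z" using zy sym by blast
        have az: "\<not> E a z" using zy sym by blast
        have bfar: "b \<noteq> a" "b \<noteq> y" "\<not> E b a" "\<not> E b y"
          using ne ind' zy nab sym by blast+
        have cfar: "c \<noteq> a" "c \<noteq> y" "\<not> E c a" "\<not> E c y"
          using ne ind' zy nac sym by blast+
        show ?thesis
        proof (cases "b \<noteq> z \<and> \<not> E b z")
          case True
          show ?thesis by (rule p5_from_p3[OF conn ay yz az zy(2)[symmetric], of b]) (use V True bfar in auto)
        next
          case bF: False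
          show ?thesis
          proof (cases "c \<noteq> z \<and> \<not> E c z")
            case True
            show ?thesis by (rule p5_from_p3[OF conn ay yz az zy(2)[symmetric], of c]) (use V True cfar in auto)
          next
            case cF: False
            have False using bF cF ne ind ind' nbc by (metis sym)
            thus ?thesis ..
          qed
        qed
      qed
    qed
  qed
qed

end

theorem theorem1:
  fixes V :: "'a set" and E :: "'a \<Rightarrow> 'a \<Rightarrow> bool"
  assumes "graph V E" and "connected_graph V E"
  shows "claw_bull_free V E \<longleftrightarrow>
           (\<exists>k\<ge>4. expansion_of V E (path_V k) (path_E k))
         \<or> (\<exists>k\<ge>6. expansion_of V E (cycle_V k) (cycle_E k))
         \<or> (connected_graph V E \<and> triangle_free V (complement V E))"
proof
  assume cbf: "claw_bull_free V E"
  interpret cbg V E using assms(1) cbf by unfold_locales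
  show "(\<exists>k\<ge>4. expansion_of V E (path_V k) (path_E k))
         \<or> (\<exists>k\<ge>6. expansion_of V E (cycle_V k) (cycle_E k))
         \<or> (connected_graph V E \<and> triangle_free V (complement V E))"
  proof (cases "triangle_free V (complement V E)")
    case True thus ?thesis using assms(2) by blast
  next
    case False
    then obtain a b c where abc: "a \<in> V" "b \<in> V" "c \<in> V" "complement V E a b"
      "complement V E b c" "complement V E a c"
      unfolding triangle_free_def by blast
    have "a \<noteq> b" "a \<noteq> c" "b \<noteq> c" "\<not>E a b" "\<not>E a c" "\<not>E b c"
      using abc unfolding complement_def by auto
    then obtain S \<phi> where "S \<subseteq> V" "PE E S 4 \<phi>" using p5[OF assms(2) abc(1-3)] by blast
    thus ?thesis using grow[OF assms(2)] by blast
  qed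
next
  assume h: "(\<exists>k\<ge>4. expansion_of V E (path_V k) (path_E k))
         \<or> (\<exists>k\<ge>6. expansion_of V E (cycle_V k) (cycle_E k))
         \<or> (connected_graph V E \<and> triangle_free V (complement V E))"
  show "claw_bull_free V E"
  proof -
    consider (p) k where "expansion_of V E (path_V k) (path_E k)"
      | (c) k where "6 \<le> k" "expansion_of V E (cycle_V k) (cycle_E k)"
      | (t) "triangle_free V (complement V E)"
      using h by blast
    then show ?thesis
    proof cases
      case p thus ?thesis using path_cbf[OF assms(1)] by blast
    next
      case c thus ?thesis using cycle_cbf[OF assms(1), of k] by simp
    next
      case t thus ?thesis using cotf_cbf[OF assms(1)] by blast
    qed
  qed
qed

end
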